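(* Let $c\in\mathsf{ACirc}[0,0]$. Then $[\![c]\!]=\mathrm{id}_0$ (that is, $\{(\bullet,\bullet)\}$) if and only if $c\uparrow$.
   Context: Fix a field $k$. Circuits: terms built from generators with sorts $(n,m)$: copier $\Delta:(1,2)$, discard $!:(1,0)$, amplifier $\mathsf{s}_r:(1,1)$ ($r\in k$), register $\mathsf{x}:(1,1)$, adder $+:(2,1)$, zero $0:(0,1)$, one $\mathbf{1}:(0,1)$; mirror images $\Delta^{op}:(2,1)$, $!^{op}:(0,1)$, $\mathsf{s}_r^{op}$, $\mathsf{x}^{op}:(1,1)$, $+^{op}:(1,2)$, $0^{op}:(1,0)$, $\mathbf{1}^{op}:(1,0)$; $\mathrm{id}_0:(0,0),\mathrm{id}_1:(1,1),\mathrm{sw}:(2,2)$; closed under $;$ and $\oplus$; $\mathsf{ACirc}[n,m]$: circuits of sort $(n,m)$. Denotation over the field $k(x)$ of polynomial fractions: $[\![\Delta]\!]=\{(p,(p,p))\}$, $[\![!]\!]=\{(p,\bullet)\}$, $[\![+]\!]=\{((p,q),p+q)\}$, $[\![0]\!]=\{(\bullet,0)\}$, $[\![\mathbf 1]\!]=\{(\bullet,1)\}$, $[\![\mathsf s_r]\!]=\{(p,rp)\}$, $[\![\mathsf x]\!]=\{(p,px)\}$ ($\bullet$ the unique element of $k(x)^0$); mirrored generators denote converse relations; structural generators denote identity, swap, $\{(\bullet,\bullet)\}$; $;$ is relational composition, $\oplus$ product of relations. Operational semantics: a state is a circuit with a value of $k$ in each register; initial state $c_0$ stores $0$ everywhere.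 Transitions $t\vdash c\xrightarrow[w]{v}c'$ at time $t\in\mathbb Z$: $\Delta$: $a/(a,a)$; $!$: $a/\bullet$; $+$: $(a,b)/a+b$; $0$: $\bullet/0$; $\mathsf s_r$: $a/ra$; $\mathsf x$ storing $b$: $a/b$, then stores $a$; $\mathbf 1$: $\bullet/1$ if $t=0$, $\bullet/0$ otherwise; mirrored generators: the same with left/right labels exchanged; $\mathrm{id}_1$: $a/a$; $\mathrm{sw}$: $(a,b)/(b,a)$; $\mathrm{id}_0$: $\bullet/\bullet$; in $c;d$ both components move at time $t$ agreeing on the shared middle label; in $c\oplus d$ both move at time $t$ with labels concatenated. A computation of $c$ starting at time $t\le0$ is a sequence of transitions $t\vdash c_0\to c_1$, $t+1\vdash c_1\to c_2,\dots$ from the initial state. For $c\in\mathsf{ACirc}[0,0]$, $c\uparrow$ means $c$ can perform an infinite computation. *)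

theory Defs
  imports "HOL-Computational_Algebra.Polynomial" "HOL-Computational_Algebra.Fraction_Field"
begin

(* Circuit terms.  's = type of amplifier scalars (the field k),
   'r = content of registers: unit for bare circuits, k for states. *)
datatype ('s, 'r) circ =
    Copy | Disc | Amp 's | Reg 'r | Add | Zero | One
  | CopyOp | DiscOp | AmpOp 's | RegOp 'r | AddOp | ZeroOp | OneOp
  | Id0 | Id1 | Sw
  | Seq "('s, 'r) circ" "('s, 'r) circ"
  | Par "('s, 'r) circ" "('s, 'r) circ"

type_synonym 'k circuit = "('k, unit) circ"
type_synonym 'k state = "('k, 'k) circ"

inductive has_sort :: "('s, 'r) circ \<Rightarrow> nat \<Rightarrow> nat \<Rightarrow> bool" where
  "has_sort Copy 1 2"
| "has_sort Disc 1 0"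
| "has_sort (Amp r) 1 1"
| "has_sort (Reg u) 1 1"
| "has_sort Add 2 1"
| "has_sort Zero 0 1"
| "has_sort One 0 1"
| "has_sort CopyOp 2 1"
| "has_sort DiscOp 0 1"
| "has_sort (AmpOp r) 1 1"
| "has_sort (RegOp u) 1 1"
| "has_sort AddOp 1 2"
| "has_sort ZeroOp 1 0"
| "has_sort OneOp 1 0"
| "has_sort Id0 0 0"
| "has_sort Id1 1 1"
| "has_sort Sw 2 2"
| "has_sort c n m \<Longrightarrow> has_sort d m l \<Longrightarrow> has_sort (Seq c d) n l"
| "has_sort c n m \<Longrightarrow> has_sort d n' m' \<Longrightarrow> has_sort (Par c d) (n + n') (m + m')"

definition ACirc :: "nat \<Rightarrow> nat \<Rightarrow> 'k circuit set" where
  "ACirc n m = {c. has_sort c n m}"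

definition kconst :: "'k::field \<Rightarrow> 'k poly fract" where
  "kconst r = Fract [:r:] 1"

definition xvar :: "'k::field poly fract" where
  "xvar = Fract [:0, 1:] 1"

type_synonym 'k rel = "('k poly fract list \<times> 'k poly fract list) set"

fun den :: "('k::field, 'r) circ \<Rightarrow> 'k rel" where
  "den Copy = {([p], [p, p]) | p. True}"
| "den Disc = {([p], []) | p. True}"
| "den (Amp r) = {([p], [kconst r * p]) | p. True}"
| "den (Reg u) = {([p], [p * xvar]) | p. True}"
| "den Add = {([p, q], [p + q]) | p q. True}"
| "den Zero = {([], [0])}"
| "den One = {([], [1])}"
| "den CopyOp = {([p], [p, p]) | p. True}\<inverse>"
| "den DiscOp = {([p], []) | p. True}\<inverse>"
| "den (AmpOp r) = {([p], [kconst r * p]) | p. True}\<inverse>"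
| "den (RegOp u) = {([p], [p * xvar]) | p. True}\<inverse>"
| "den AddOp = {([p, q], [p + q]) | p q. True}\<inverse>"
| "den ZeroOp = {([], [0])}\<inverse>"
| "den OneOp = {([], [1])}\<inverse>"
| "den Id0 = {([], [])}"
| "den Id1 = {([p], [p]) | p. True}"
| "den Sw = {([p, q], [q, p]) | p q. True}"
| "den (Seq c d) = den c O den d"
| "den (Par c d) = {(u1 @ u2, v1 @ v2) | u1 u2 v1 v2. (u1, v1) \<in> den c \<and> (u2, v2) \<in> den d}"

(* Operational semantics: step t s u v s' means  t |- s --u/v--> s'
   (u = left label, v = right label, lists of values in k) *)
inductive step :: "int \<Rightarrow> ('k::field) state \<Rightarrow> 'k list \<Rightarrow> 'k list \<Rightarrow> 'k state \<Rightarrow> bool" where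
  "step t Copy [a] [a, a] Copy"
| "step t Disc [a] [] Disc"
| "step t Add [a, b] [a + b] Add"
| "step t Zero [] [0] Zero"
| "step t (Amp r) [a] [r * a] (Amp r)"
| "step t (Reg b) [a] [b] (Reg a)"
| "step t One [] [if t = 0 then 1 else 0] One"
| "step t CopyOp [a, a] [a] CopyOp"
| "step t DiscOp [] [a] DiscOp"
| "step t AddOp [a + b] [a, b] AddOp"
| "step t ZeroOp [0] [] ZeroOp"
| "step t (AmpOp r) [r * a] [a] (AmpOp r)"
| "step t (RegOp b) [b] [a] (RegOp a)"
| "step t OneOp [if t = 0 then 1 else 0] [] OneOp"
| "step t Id1 [a] [a] Id1"
| "step t Sw [a, b] [b, a] Sw"
| "step t Id0 [] [] Id0"
| "step t c u v c' \<Longrightarrow> step t d v w d' \<Longrightarrow> step t (Seq c d) u w (Seq c' d')"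
| "step t c u1 v1 c' \<Longrightarrow> step t d u2 v2 d' \<Longrightarrow>
     step t (Par c d) (u1 @ u2) (v1 @ v2) (Par c' d')"

definition init_state :: "'k::field circuit \<Rightarrow> 'k state" where
  "init_state c = map_circ id (\<lambda>_. 0) c"

(* c can perform an infinite computation, starting at some time t \<le> 0
   (labels of a (0,0) circuit are empty) *)
definition diverges :: "'k::field circuit \<Rightarrow> bool" where
  "diverges c \<longleftrightarrow> (\<exists>t::int. t \<le> 0 \<and> (\<exists>s :: nat \<Rightarrow> 'k state.
      s 0 = init_state c \<and> (\<forall>n. step (t + int n) (s n) [] [] (s (Suc n)))))"

end

theory Submission
  imports Defs "HOL-Computational_Algebra.Formal_Laurent_Series" "HOL-Computational_Algebra.Polynomial_FPS"
begin

abbreviation P :: "'k::field poly \<Rightarrow> 'k fls" where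
  "P a \<equiv> fps_to_fls (fps_of_poly a)"

lemma P_mult: "P (a * b) = P a * P b"
  by (simp add: fps_of_poly_mult fls_times_fps_to_fls)

lemma P_add: "P (a + b) = P a + P b"
  by (simp add: fps_of_poly_add)

lemma P_eq0: "P a = 0 \<longleftrightarrow> a = 0"
  using fps_of_poly_eq_iff[of a 0] by simp

lift_definition phi :: "'k::field poly fract \<Rightarrow> 'k fls" is
  "\<lambda>(a, b). P a / P b"
proof -
  fix x y :: "'k poly \<times> 'k poly"
  assume "fractrel x y"
  then show "(case x of (a, b) \<Rightarrow> P a / P b) = (case y of (a, b) \<Rightarrow> P a / P b)"
    apply (cases x; cases y)
    apply (simp add: fractrel_def)
    by (metis P_eq0 P_mult frac_eq_eq)
qed

lemma phi_Fract: "b \<noteq> 0 \<Longrightarrow> phi (Fract a b) = P a / P b"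
  by transfer simp

lemma phi_add: "phi (x + y) = phi x + phi y"
proof -
  obtain a b where x: "x = Fract a b" "b \<noteq> 0" by (cases x) auto
  obtain c d where y: "y = Fract c d" "d \<noteq> 0" by (cases y) auto
  show ?thesis using x y P_eq0[of b] P_eq0[of d]
    by (simp add: phi_Fract P_mult P_add field_simps)
qed

lemma phi_mult: "phi (x * y) = phi x * phi y"
proof -
  obtain a b where x: "x = Fract a b" "b \<noteq> 0" by (cases x) auto
  obtain c d where y: "y = Fract c d" "d \<noteq> 0" by (cases y) auto
  show ?thesis using x y P_eq0[of b] P_eq0[of d]
    by (simp add: phi_Fract P_mult P_add field_simps)
qed

lemma phi_one: "phi 1 = 1"
  by (simp add: One_fract_def phi_Fract)

lemma phi_zero: "phi 0 = 0"
  by (simp add: Zero_fract_def phi_Fract)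

lemma phi_kconst: "phi (kconst r) = fls_const r"
  by (simp add: kconst_def phi_Fract fps_of_poly_const)

lemma phi_xvar: "phi xvar = fls_X"
  by (simp add: xvar_def phi_Fract)

lemma exists_retraction:
  "\<exists>g :: 'k::field fls \<Rightarrow> 'k poly fract.
     (\<forall>x y. g (x + y) = g x + g y) \<and> (\<forall>a x. g (phi a * x) = a * g x) \<and> g 1 = 1"
proof -
  interpret V1: vector_space "\<lambda>a (x::'k fls). phi a * x"
    by unfold_locales (simp_all add: phi_add phi_mult phi_one algebra_simps)
  interpret V2: vector_space "(*) :: 'k poly fract \<Rightarrow> _"
    by unfold_locales (simp_all add: algebra_simps)
  interpret VP: vector_space_pair "\<lambda>a (x::'k fls). phi a * x" "(*) :: 'k poly fract \<Rightarrow> _"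
    by unfold_locales
  have "V1.independent {1}"
    using V1.independent_insert[of 1 "{}"] V1.span_empty by simp
  from VP.linear_independent_extend[OF this, of "\<lambda>_. 1"]
  obtain g where "Vector_Spaces.linear (\<lambda>a (x::'k fls). phi a * x) (*) g" "g 1 = 1" by auto
  then show ?thesis
    by (metis (no_types, lifting) Vector_Spaces.linear_def module_hom.add module_hom.scale)
qed


fun denG :: "('s \<Rightarrow> 'f::field) \<Rightarrow> 'f \<Rightarrow> ('s, 'r) circ \<Rightarrow> ('f list \<times> 'f list) set" where
  "denG K X Copy = {([p], [p, p]) | p. True}"
| "denG K X Disc = {([p], []) | p. True}"
| "denG K X (Amp r) = {([p], [K r * p]) | p. True}"
| "denG K X (Reg u) = {([p], [p * X]) | p. True}"
| "denG K X Add = {([p, q], [p + q]) | p q. True}"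
| "denG K X Zero = {([], [0])}"
| "denG K X One = {([], [1])}"
| "denG K X CopyOp = {([p], [p, p]) | p. True}\<inverse>"
| "denG K X DiscOp = {([p], []) | p. True}\<inverse>"
| "denG K X (AmpOp r) = {([p], [K r * p]) | p. True}\<inverse>"
| "denG K X (RegOp u) = {([p], [p * X]) | p. True}\<inverse>"
| "denG K X AddOp = {([p, q], [p + q]) | p q. True}\<inverse>"
| "denG K X ZeroOp = {([], [0])}\<inverse>"
| "denG K X OneOp = {([], [1])}\<inverse>"
| "denG K X Id0 = {([], [])}"
| "denG K X Id1 = {([p], [p]) | p. True}"
| "denG K X Sw = {([p, q], [q, p]) | p q. True}"
| "denG K X (Seq c d) = denG K X c O denG K X d"
| "denG K X (Par c d) = {(u1 @ u2, v1 @ v2) | u1 u2 v1 v2. (u1, v1) \<in> denG K X c \<and> (u2, v2) \<in> denG K X d}"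

lemma den_denG: "den c = denG kconst xvar c"
  by (induction c) auto

lemma denG_map:
  fixes g :: "'a::field \<Rightarrow> 'b::field"
  assumes add: "\<And>x y. g (x + y) = g x + g y" and one: "g 1 = 1"
    and K: "\<And>r p. g (K1 r * p) = K2 r * g p" and X: "\<And>p. g (p * X1) = g p * X2"
  shows "(u, v) \<in> denG K1 X1 c \<Longrightarrow> (map g u, map g v) \<in> denG K2 X2 c"
proof -
  have "g 0 + g 0 = g 0 + 0" using add[of 0 0] by simp
  then have g0: "g 0 = 0" by (simp only: add_left_cancel)
  show "(u, v) \<in> denG K1 X1 c \<Longrightarrow> (map g u, map g v) \<in> denG K2 X2 c"
proof (induction c arbitrary: u v)
  case (Seq c d)
  then show ?case by fastforce
next
  case (Par c d)
  then show ?case by fastforce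
qed (use add one K X g0 in auto)
qed


abbreviation denF :: "('k::field, 'r) circ \<Rightarrow> ('k fls list \<times> 'k fls list) set" where
  "denF \<equiv> denG fls_const fls_X"

definition lab :: "int \<Rightarrow> 'k::field fls list \<Rightarrow> nat \<Rightarrow> 'k list" where
  "lab t u n = map (\<lambda>p. fls_nth p (t + int n)) u"

lemma fls_times_X_nth: "fls_nth (p * fls_X) k = fls_nth p (k - 1)"
  "fls_nth (fls_X * p) k = fls_nth p (k - 1)"
  for p :: "'k::field fls"
  unfolding fls_X_times_conv_shift by simp_all

inductive_simps step_simps:
  "step t Copy u v s'" "step t Disc u v s'" "step t (Amp r) u v s'" "step t (Reg b) u v s'"
  "step t Add u v s'" "step t Zero u v s'" "step t One u v s'"
  "step t CopyOp u v s'" "step t DiscOp u v s'" "step t (AmpOp r) u v s'" "step t (RegOp b) u v s'"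
  "step t AddOp u v s'" "step t ZeroOp u v s'" "step t OneOp u v s'"
  "step t Id0 u v s'" "step t Id1 u v s'" "step t Sw u v s'"
  "step t (Seq c d) u v s'" "step t (Par c d) u v s'"

lemma init_simps [simp]:
  "init_state (Seq c d) = Seq (init_state c) (init_state d)"
  "init_state (Par c d) = Par (init_state c) (init_state d)"
  "init_state (Reg x) = Reg 0" "init_state (RegOp x) = RegOp 0"
  "init_state Copy = Copy" "init_state Disc = Disc" "init_state (Amp r) = Amp r"
  "init_state Add = Add" "init_state Zero = Zero" "init_state One = One"
  "init_state CopyOp = CopyOp" "init_state DiscOp = DiscOp" "init_state (AmpOp r) = AmpOp r"
  "init_state AddOp = AddOp" "init_state ZeroOp = ZeroOp" "init_state OneOp = OneOp"
  "init_state Id0 = Id0" "init_state Id1 = Id1" "init_state Sw = Sw"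
  by (simp_all add: init_state_def)

lemma den_run:
  fixes c :: "'k::field circuit"
  shows "(u, v) \<in> denF c \<Longrightarrow> \<exists>t0. \<forall>t\<le>t0. \<exists>s. s 0 = init_state c \<and>
     (\<forall>n. step (t + int n) (s n) (lab t u n) (lab t v n) (s (Suc n)))"
proof (induction c arbitrary: u v)
  case (Reg x)
  then obtain p where uv: "u = [p]" "v = [p * fls_X]" by auto
  show ?case
  proof (rule exI, intro allI impI)
    fix t assume t: "t \<le> fls_subdegree p"
    let ?s = "\<lambda>n. Reg (fls_nth (p) (t + int n - 1)) :: 'k state"
    have a: "?s 0 = init_state (Reg x)" using t by simp
    have b: "\<forall>n. step (t + int n) (?s n) (lab t u n) (lab t v n) (?s (Suc n))"
      by (simp add: uv lab_def fls_times_X_nth step_simps algebra_simps)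
    show "\<exists>s. s 0 = init_state (Reg x) \<and> (\<forall>n. step (t + int n) (s n) (lab t u n) (lab t v n) (s (Suc n)))"
      by (rule exI[of _ ?s]) (use a b in blast)
  qed
next
  case (RegOp x)
  then obtain p where uv: "v = [p]" "u = [p * fls_X]" by auto
  show ?case
  proof (rule exI, intro allI impI)
    fix t assume t: "t \<le> fls_subdegree p"
    let ?s = "\<lambda>n. RegOp (fls_nth (p) (t + int n - 1)) :: 'k state"
    have a: "?s 0 = init_state (RegOp x)" using t by simp
    have b: "\<forall>n. step (t + int n) (?s n) (lab t u n) (lab t v n) (?s (Suc n))"
      by (simp add: uv lab_def fls_times_X_nth step_simps algebra_simps)
    show "\<exists>s. s 0 = init_state (RegOp x) \<and> (\<forall>n. step (t + int n) (s n) (lab t u n) (lab t v n) (s (Suc n)))"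
      by (rule exI[of _ ?s]) (use a b in blast)
  qed
next
  case (Seq c d)
  then obtain w where w: "(u, w) \<in> denF c" "(w, v) \<in> denF d" by auto
  obtain t1 where t1: "\<forall>t\<le>t1. \<exists>s. s 0 = init_state c \<and> (\<forall>n. step (t + int n) (s n) (lab t u n) (lab t w n) (s (Suc n)))"
    using Seq.IH(1)[OF w(1)] by blast
  obtain t2 where t2: "\<forall>t\<le>t2. \<exists>s. s 0 = init_state d \<and> (\<forall>n. step (t + int n) (s n) (lab t w n) (lab t v n) (s (Suc n)))"
    using Seq.IH(2)[OF w(2)] by blast
  show ?case
  proof (rule exI, intro allI impI)
    fix t assume t: "t \<le> min t1 t2"
    obtain s1 where s1: "s1 0 = init_state c" "\<forall>n. step (t + int n) (s1 n) (lab t u n) (lab t w n) (s1 (Suc n))"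
      using t1 t by auto
    obtain s2 where s2: "s2 0 = init_state d" "\<forall>n. step (t + int n) (s2 n) (lab t w n) (lab t v n) (s2 (Suc n))"
      using t2 t by auto
    show "\<exists>s. s 0 = init_state (Seq c d) \<and> (\<forall>n. step (t + int n) (s n) (lab t u n) (lab t v n) (s (Suc n)))"
      by (rule exI[of _ "\<lambda>n. Seq (s1 n) (s2 n)"]) (use s1 s2 in \<open>auto intro: step.intros\<close>)
  qed
next
  case (Par c d)
  then obtain u1 u2 v1 v2 where w: "u = u1 @ u2" "v = v1 @ v2" "(u1, v1) \<in> denF c" "(u2, v2) \<in> denF d" by auto
  obtain t1 where t1: "\<forall>t\<le>t1. \<exists>s. s 0 = init_state c \<and> (\<forall>n. step (t + int n) (s n) (lab t u1 n) (lab t v1 n) (s (Suc n)))"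
    using Par.IH(1)[OF w(3)] by blast
  obtain t2 where t2: "\<forall>t\<le>t2. \<exists>s. s 0 = init_state d \<and> (\<forall>n. step (t + int n) (s n) (lab t u2 n) (lab t v2 n) (s (Suc n)))"
    using Par.IH(2)[OF w(4)] by blast
  show ?case
  proof (rule exI, intro allI impI)
    fix t assume t: "t \<le> min t1 t2"
    obtain s1 where s1: "s1 0 = init_state c" "\<forall>n. step (t + int n) (s1 n) (lab t u1 n) (lab t v1 n) (s1 (Suc n))"
      using t1 t by auto
    obtain s2 where s2: "s2 0 = init_state d" "\<forall>n. step (t + int n) (s2 n) (lab t u2 n) (lab t v2 n) (s2 (Suc n))"
      using t2 t by auto
    show "\<exists>s. s 0 = init_state (Par c d) \<and> (\<forall>n. step (t + int n) (s n) (lab t u n) (lab t v n) (s (Suc n)))"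
      by (rule exI[of _ "\<lambda>n. Par (s1 n) (s2 n)"]) (use s1 s2 in \<open>auto simp: w lab_def intro: step.intros\<close>)
  qed
qed (auto simp: lab_def step_simps intro!: exI[of _ 0] exI[of _ "\<lambda>_. _"])


definition strm :: "int \<Rightarrow> (nat \<Rightarrow> 'k::field) \<Rightarrow> 'k fls" where
  "strm t g = Abs_fls (\<lambda>k. if k < t then 0 else g (nat (k - t)))"

lemma strm_nth: "fls_nth (strm t g) k = (if k < t then 0 else g (nat (k - t)))"
  unfolding strm_def by (rule nth_Abs_fls_lower_bound[of t]) simp

lemma strm_nth' [simp]: "fls_nth (strm t g) (t + int n) = g n"
  by (simp add: strm_nth)

definition vanish :: "int \<Rightarrow> 'k::field fls list \<Rightarrow> bool" where
  "vanish t u \<longleftrightarrow> (\<forall>p\<in>set u. \<forall>k<t. fls_nth p k = 0)"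

lemma lab_append: "lab t (u1 @ u2) n = lab t u1 n @ lab t u2 n"
  by (simp add: lab_def)

lemma vanish_append: "vanish t (u1 @ u2) \<longleftrightarrow> vanish t u1 \<and> vanish t u2"
  by (auto simp: vanish_def)

lemma lab_inj:
  assumes "\<forall>n. lab t w1 n = lab t w2 n" "vanish t w1" "vanish t w2"
  shows "w1 = w2"
proof (rule nth_equalityI)
  show len: "length w1 = length w2" using assms(1) by (metis lab_def length_map)
  fix i assume i: "i < length w1"
  show "w1 ! i = w2 ! i"
  proof (rule fls_eqI)
    fix k
    show "fls_nth (w1 ! i) k = fls_nth (w2 ! i) k"
    proof (cases "k < t")
      case True
      then show ?thesis using assms(2,3) i len by (auto simp: vanish_def)
    next
      case False
      then have k: "k = t + int (nat (k - t))" by simp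
      define n where "n = nat (k - t)"
      then have k: "k = t + int n" using k by simp
      have "lab t w1 n ! i = lab t w2 n ! i" using assms(1) by simp
      then show ?thesis using i len k by (simp add: lab_def)
    qed
  qed
qed

lemma const_run:
  assumes "s 0 = G" "\<forall>n. step (t + int n) (s n) (U n) (V n) (s (Suc n))"
    "\<And>t u v s'. step t G u v s' \<Longrightarrow> s' = G"
  shows "\<forall>n. step (t + int n) G (U n) (V n) G"
proof -
  have "s n = G" for n
  proof (induction n)
    case 0 then show ?case using assms(1) by simp
  next
    case (Suc n) then show ?case using assms(2)[rule_format, of n] assms(3) by metis
  qed
  then show ?thesis using assms(2) by metis
qed

lemma seq_run:
  assumes "s 0 = Seq a0 b0" "\<forall>n. step (t + int n) (s n) (U n) (V n) (s (Suc n))"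
  shows "\<exists>s1 s2 W. s1 0 = a0 \<and> s2 0 = b0 \<and> (\<forall>n. step (t + int n) (s1 n) (U n) (W n) (s1 (Suc n))
     \<and> step (t + int n) (s2 n) (W n) (V n) (s2 (Suc n)))"
proof -
  have "\<exists>a b. s n = Seq a b" for n
  proof (induction n)
    case 0 then show ?case using assms by auto
  next
    case (Suc n) then show ?case using assms(2)[rule_format, of n] by (auto simp: step_simps)
  qed
  then obtain A B where AB: "\<forall>n. s n = Seq (A n) (B n)" by metis
  have "\<forall>n. \<exists>w. step (t + int n) (A n) (U n) w (A (Suc n)) \<and> step (t + int n) (B n) w (V n) (B (Suc n))"
    using assms(2) AB by (auto simp: step_simps)
  then obtain W where "\<forall>n. step (t + int n) (A n) (U n) (W n) (A (Suc n)) \<and> step (t + int n) (B n) (W n) (V n) (B (Suc n))"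
    by metis
  moreover have "A 0 = a0" "B 0 = b0" using AB[rule_format, of 0] assms(1) by simp_all
  ultimately show ?thesis by blast
qed

lemma par_run:
  assumes "s 0 = Par a0 b0" "\<forall>n. step (t + int n) (s n) (U n) (V n) (s (Suc n))"
  shows "\<exists>s1 s2 U1 U2 V1 V2. s1 0 = a0 \<and> s2 0 = b0 \<and> (\<forall>n. U n = U1 n @ U2 n \<and> V n = V1 n @ V2 n \<and>
     step (t + int n) (s1 n) (U1 n) (V1 n) (s1 (Suc n)) \<and> step (t + int n) (s2 n) (U2 n) (V2 n) (s2 (Suc n)))"
proof -
  have "\<exists>a b. s n = Par a b" for n
  proof (induction n)
    case 0 then show ?case using assms by auto
  next
    case (Suc n) then show ?case using assms(2)[rule_format, of n] by (auto simp: step_simps)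
  qed
  then obtain A B where AB: "\<forall>n. s n = Par (A n) (B n)" by metis
  have "\<forall>n. \<exists>u1 u2 v1 v2. U n = u1 @ u2 \<and> V n = v1 @ v2 \<and> step (t + int n) (A n) u1 v1 (A (Suc n)) \<and> step (t + int n) (B n) u2 v2 (B (Suc n))"
    using assms(2) AB by (fastforce simp: step_simps)
  then obtain U1 U2 V1 V2 where "\<forall>n. U n = U1 n @ U2 n \<and> V n = V1 n @ V2 n \<and> step (t + int n) (A n) (U1 n) (V1 n) (A (Suc n)) \<and> step (t + int n) (B n) (U2 n) (V2 n) (B (Suc n))"
    by metis
  moreover have "A 0 = a0" "B 0 = b0" using AB[rule_format, of 0] assms(1) by simp_all
  ultimately show ?thesis by blast
qed


lemma run_den:
  fixes c :: "'k::field circuit" and s :: "nat \<Rightarrow> 'k state"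
  assumes t: "t \<le> 0"
  shows "s 0 = init_state c \<Longrightarrow> \<forall>n. step (t + int n) (s n) (U n) (V n) (s (Suc n)) \<Longrightarrow>
    \<exists>u v. (u, v) \<in> denF c \<and> (\<forall>n. U n = lab t u n) \<and> (\<forall>n. V n = lab t v n) \<and> vanish t u \<and> vanish t v"
proof (induction c arbitrary: s U V)
  case (Seq c d)
  obtain s1 s2 W where r: "s1 0 = init_state c" "s2 0 = init_state d"
    "\<forall>n. step (t + int n) (s1 n) (U n) (W n) (s1 (Suc n)) \<and> step (t + int n) (s2 n) (W n) (V n) (s2 (Suc n))"
    using seq_run[OF Seq.prems(1)[simplified] Seq.prems(2)] by blast
  obtain u w1 where 1: "(u, w1) \<in> denF c" "\<forall>n. U n = lab t u n" "\<forall>n. W n = lab t w1 n" "vanish t u" "vanish t w1"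
    using Seq.IH(1)[of s1 U W, OF r(1)] r(3) by blast
  obtain w2 v where 2: "(w2, v) \<in> denF d" "\<forall>n. W n = lab t w2 n" "\<forall>n. V n = lab t v n" "vanish t w2" "vanish t v"
    using Seq.IH(2)[of s2 W V, OF r(2)] r(3) by blast
  have "w1 = w2" using lab_inj[of t w1 w2] 1 2 by simp
  then show ?case using 1 2 by auto
next
  case (Par c d)
  obtain s1 s2 U1 U2 V1 V2 where r: "s1 0 = init_state c" "s2 0 = init_state d"
    "\<forall>n. U n = U1 n @ U2 n \<and> V n = V1 n @ V2 n \<and>
     step (t + int n) (s1 n) (U1 n) (V1 n) (s1 (Suc n)) \<and> step (t + int n) (s2 n) (U2 n) (V2 n) (s2 (Suc n))"
    using par_run[OF Par.prems(1)[simplified] Par.prems(2)] by blast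
  obtain u1 v1 where 1: "(u1, v1) \<in> denF c" "\<forall>n. U1 n = lab t u1 n" "\<forall>n. V1 n = lab t v1 n" "vanish t u1" "vanish t v1"
    using Par.IH(1)[of s1 U1 V1, OF r(1)] r(3) by blast
  obtain u2 v2 where 2: "(u2, v2) \<in> denF d" "\<forall>n. U2 n = lab t u2 n" "\<forall>n. V2 n = lab t v2 n" "vanish t u2" "vanish t v2"
    using Par.IH(2)[of s2 U2 V2, OF r(2)] r(3) by blast
  show ?case
    by (rule exI[of _ "u1 @ u2"], rule exI[of _ "v1 @ v2"]) (use 1 2 r(3) in \<open>auto simp: lab_append vanish_append\<close>)
next
  case (Reg x)
  have "\<exists>b. s n = Reg b" for n
  proof (induction n)
    case 0 then show ?case using Reg.prems(1) by simp
  next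
    case (Suc n) then show ?case using Reg.prems(2)[rule_format, of n] by (auto simp: step_simps)
  qed
  then obtain b where b: "\<forall>n. s n = Reg (b n)" by metis
  have b0: "b 0 = 0" using b Reg.prems(1) by (metis circ.inject(2) init_simps(3))
  have lbl: "\<forall>n. U n = [b (Suc n)] \<and> V n = [b n]"
    using Reg.prems(2) b by (auto simp: step_simps)
  let ?u = "strm t (\<lambda>n. b (Suc n))" and ?v = "strm t b"
  have "?v = ?u * fls_X"
  proof (rule fls_eqI)
    fix k
    show "fls_nth ?v k = fls_nth (?u * fls_X) k"
      unfolding fls_times_X_nth strm_nth
      using b0 by (cases "k < t"; cases "k = t") (auto intro!: arg_cong[where f=b])
  qed
  then have mem: "([?u], [?v]) \<in> denF (Reg x)" by simp
  show ?case
  proof (rule exI[of _ "[?u]"], rule exI[of _ "[?v]"], intro conjI)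
    show "([?u], [?v]) \<in> denF (Reg x)" by (rule mem)
  qed (use lbl in \<open>auto simp: lab_def vanish_def strm_nth\<close>)
next
  case (RegOp x)
  have "\<exists>b. s n = RegOp b" for n
  proof (induction n)
    case 0 then show ?case using RegOp.prems(1) by simp
  next
    case (Suc n) then show ?case using RegOp.prems(2)[rule_format, of n] by (auto simp: step_simps)
  qed
  then obtain b where b: "\<forall>n. s n = RegOp (b n)" by metis
  have b0: "b 0 = 0" using b RegOp.prems(1) by (metis circ.inject(4) init_simps(4))
  have lbl: "\<forall>n. V n = [b (Suc n)] \<and> U n = [b n]"
    using RegOp.prems(2) b by (auto simp: step_simps)
  let ?u = "strm t (\<lambda>n. b (Suc n))" and ?v = "strm t b"
  have "?v = ?u * fls_X"
  proof (rule fls_eqI)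
    fix k
    show "fls_nth ?v k = fls_nth (?u * fls_X) k"
      unfolding fls_times_X_nth strm_nth
      using b0 by (cases "k < t"; cases "k = t") (auto intro!: arg_cong[where f=b])
  qed
  then have mem: "([?v], [?u]) \<in> denF (RegOp x)" by simp
  show ?case
  proof (rule exI[of _ "[?v]"], rule exI[of _ "[?u]"], intro conjI)
    show "([?v], [?u]) \<in> denF (RegOp x)" by (rule mem)
  qed (use lbl in \<open>auto simp: lab_def vanish_def strm_nth\<close>)
next
  case Copy
  have "\<forall>n. step (t + int n) (Copy) (U n) (V n) (Copy)"
    by (rule const_run[OF Copy.prems(1)[simplified] Copy.prems(2)]) (auto simp: step_simps)
  then have "\<forall>n. \<exists>a. U n = [a] \<and> V n = [a, a]" by (auto simp: step_simps)
  then obtain a where ab: "\<forall>n. U n = [(a n)] \<and> V n = [(a n), (a n)]" by metis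
  show ?case
    by (rule exI[of _ "[strm t a]"], rule exI[of _ "[strm t a, strm t a]"]) (use ab t in \<open>auto simp: lab_def vanish_def strm_nth\<close>)
next
  case Disc
  have "\<forall>n. step (t + int n) (Disc) (U n) (V n) (Disc)"
    by (rule const_run[OF Disc.prems(1)[simplified] Disc.prems(2)]) (auto simp: step_simps)
  then have "\<forall>n. \<exists>a. U n = [a] \<and> V n = []" by (auto simp: step_simps)
  then obtain a where ab: "\<forall>n. U n = [(a n)] \<and> V n = []" by metis
  show ?case
    by (rule exI[of _ "[strm t a]"], rule exI[of _ "[]"]) (use ab t in \<open>auto simp: lab_def vanish_def strm_nth\<close>)
next
  case (Amp r)
  have "\<forall>n. step (t + int n) (Amp r) (U n) (V n) (Amp r)"
    by (rule const_run[OF Amp.prems(1)[simplified] Amp.prems(2)]) (auto simp: step_simps)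
  then have "\<forall>n. \<exists>a. U n = [a] \<and> V n = [r * a]" by (auto simp: step_simps)
  then obtain a where ab: "\<forall>n. U n = [(a n)] \<and> V n = [r * (a n)]" by metis
  show ?case
    by (rule exI[of _ "[strm t a]"], rule exI[of _ "[fls_const r * strm t a]"]) (use ab t in \<open>auto simp: lab_def vanish_def strm_nth\<close>)
next
  case Add
  have "\<forall>n. step (t + int n) (Add) (U n) (V n) (Add)"
    by (rule const_run[OF Add.prems(1)[simplified] Add.prems(2)]) (auto simp: step_simps)
  then have "\<forall>n. \<exists>a b. U n = [a, b] \<and> V n = [a + b]" by (auto simp: step_simps)
  then obtain a b where ab: "\<forall>n. U n = [(a n), (b n)] \<and> V n = [(a n) + (b n)]" by metis
  show ?case
    by (rule exI[of _ "[strm t a, strm t b]"], rule exI[of _ "[strm t a + strm t b]"]) (use ab t in \<open>auto simp: lab_def vanish_def strm_nth\<close>)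
next
  case Zero
  have "\<forall>n. step (t + int n) (Zero) (U n) (V n) (Zero)"
    by (rule const_run[OF Zero.prems(1)[simplified] Zero.prems(2)]) (auto simp: step_simps)
  then have "\<forall>n. U n = [] \<and> V n = [0]" by (auto simp: step_simps)
  then have ab: "\<forall>n. U n = [] \<and> V n = [0]" by simp
  show ?case
    by (rule exI[of _ "[]"], rule exI[of _ "[0]"]) (use ab t in \<open>auto simp: lab_def vanish_def strm_nth\<close>)
next
  case One
  have "\<forall>n. step (t + int n) (One) (U n) (V n) (One)"
    by (rule const_run[OF One.prems(1)[simplified] One.prems(2)]) (auto simp: step_simps)
  then have "\<forall>n. U n = [] \<and> V n = [if t + int n = 0 then 1 else 0]" by (auto simp: step_simps)
  then have ab: "\<forall>n. U n = [] \<and> V n = [if t + int n = 0 then 1 else 0]" by simp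
  show ?case
    by (rule exI[of _ "[]"], rule exI[of _ "[1]"]) (use ab t in \<open>auto simp: lab_def vanish_def strm_nth\<close>)
next
  case CopyOp
  have "\<forall>n. step (t + int n) (CopyOp) (U n) (V n) (CopyOp)"
    by (rule const_run[OF CopyOp.prems(1)[simplified] CopyOp.prems(2)]) (auto simp: step_simps)
  then have "\<forall>n. \<exists>a. U n = [a, a] \<and> V n = [a]" by (auto simp: step_simps)
  then obtain a where ab: "\<forall>n. U n = [(a n), (a n)] \<and> V n = [(a n)]" by metis
  show ?case
    by (rule exI[of _ "[strm t a, strm t a]"], rule exI[of _ "[strm t a]"]) (use ab t in \<open>auto simp: lab_def vanish_def strm_nth\<close>)
next
  case DiscOp
  have "\<forall>n. step (t + int n) (DiscOp) (U n) (V n) (DiscOp)"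
    by (rule const_run[OF DiscOp.prems(1)[simplified] DiscOp.prems(2)]) (auto simp: step_simps)
  then have "\<forall>n. \<exists>a. U n = [] \<and> V n = [a]" by (auto simp: step_simps)
  then obtain a where ab: "\<forall>n. U n = [] \<and> V n = [(a n)]" by metis
  show ?case
    by (rule exI[of _ "[]"], rule exI[of _ "[strm t a]"]) (use ab t in \<open>auto simp: lab_def vanish_def strm_nth\<close>)
next
  case (AmpOp r)
  have "\<forall>n. step (t + int n) (AmpOp r) (U n) (V n) (AmpOp r)"
    by (rule const_run[OF AmpOp.prems(1)[simplified] AmpOp.prems(2)]) (auto simp: step_simps)
  then have "\<forall>n. \<exists>a. U n = [r * a] \<and> V n = [a]" by (auto simp: step_simps)
  then obtain a where ab: "\<forall>n. U n = [r * (a n)] \<and> V n = [(a n)]" by metis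
  show ?case
    by (rule exI[of _ "[fls_const r * strm t a]"], rule exI[of _ "[strm t a]"]) (use ab t in \<open>auto simp: lab_def vanish_def strm_nth\<close>)
next
  case AddOp
  have "\<forall>n. step (t + int n) (AddOp) (U n) (V n) (AddOp)"
    by (rule const_run[OF AddOp.prems(1)[simplified] AddOp.prems(2)]) (auto simp: step_simps)
  then have "\<forall>n. \<exists>a b. U n = [a + b] \<and> V n = [a, b]" by (auto simp: step_simps)
  then obtain a b where ab: "\<forall>n. U n = [(a n) + (b n)] \<and> V n = [(a n), (b n)]" by metis
  show ?case
    by (rule exI[of _ "[strm t a + strm t b]"], rule exI[of _ "[strm t a, strm t b]"]) (use ab t in \<open>auto simp: lab_def vanish_def strm_nth\<close>)
next
  case ZeroOp
  have "\<forall>n. step (t + int n) (ZeroOp) (U n) (V n) (ZeroOp)"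
    by (rule const_run[OF ZeroOp.prems(1)[simplified] ZeroOp.prems(2)]) (auto simp: step_simps)
  then have "\<forall>n. U n = [0] \<and> V n = []" by (auto simp: step_simps)
  then have ab: "\<forall>n. U n = [0] \<and> V n = []" by simp
  show ?case
    by (rule exI[of _ "[0]"], rule exI[of _ "[]"]) (use ab t in \<open>auto simp: lab_def vanish_def strm_nth\<close>)
next
  case OneOp
  have "\<forall>n. step (t + int n) (OneOp) (U n) (V n) (OneOp)"
    by (rule const_run[OF OneOp.prems(1)[simplified] OneOp.prems(2)]) (auto simp: step_simps)
  then have "\<forall>n. U n = [if t + int n = 0 then 1 else 0] \<and> V n = []" by (auto simp: step_simps)
  then have ab: "\<forall>n. U n = [if t + int n = 0 then 1 else 0] \<and> V n = []" by simp
  show ?case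
    by (rule exI[of _ "[1]"], rule exI[of _ "[]"]) (use ab t in \<open>auto simp: lab_def vanish_def strm_nth\<close>)
next
  case Id0
  have "\<forall>n. step (t + int n) (Id0) (U n) (V n) (Id0)"
    by (rule const_run[OF Id0.prems(1)[simplified] Id0.prems(2)]) (auto simp: step_simps)
  then have "\<forall>n. U n = [] \<and> V n = []" by (auto simp: step_simps)
  then have ab: "\<forall>n. U n = [] \<and> V n = []" by simp
  show ?case
    by (rule exI[of _ "[]"], rule exI[of _ "[]"]) (use ab t in \<open>auto simp: lab_def vanish_def strm_nth\<close>)
next
  case Id1
  have "\<forall>n. step (t + int n) (Id1) (U n) (V n) (Id1)"
    by (rule const_run[OF Id1.prems(1)[simplified] Id1.prems(2)]) (auto simp: step_simps)
  then have "\<forall>n. \<exists>a. U n = [a] \<and> V n = [a]" by (auto simp: step_simps)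
  then obtain a where ab: "\<forall>n. U n = [(a n)] \<and> V n = [(a n)]" by metis
  show ?case
    by (rule exI[of _ "[strm t a]"], rule exI[of _ "[strm t a]"]) (use ab t in \<open>auto simp: lab_def vanish_def strm_nth\<close>)
next
  case Sw
  have "\<forall>n. step (t + int n) (Sw) (U n) (V n) (Sw)"
    by (rule const_run[OF Sw.prems(1)[simplified] Sw.prems(2)]) (auto simp: step_simps)
  then have "\<forall>n. \<exists>a b. U n = [a, b] \<and> V n = [b, a]" by (auto simp: step_simps)
  then obtain a b where ab: "\<forall>n. U n = [(a n), (b n)] \<and> V n = [(b n), (a n)]" by metis
  show ?case
    by (rule exI[of _ "[strm t a, strm t b]"], rule exI[of _ "[strm t b, strm t a]"]) (use ab t in \<open>auto simp: lab_def vanish_def strm_nth\<close>)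
qed


lemma den_sort: "has_sort c n m \<Longrightarrow> (u, v) \<in> den c \<Longrightarrow> length u = n \<and> length v = m"
proof (induction c n m arbitrary: u v rule: has_sort.induct)
  case (18 c n m d l)
  then show ?case by fastforce
next
  case (19 c n m d n' m')
  then show ?case by fastforce
qed auto

theorem proposition5:
  fixes c :: "'k::field circuit"
  assumes "c \<in> ACirc 0 0"
  shows "den c = {([], [])} \<longleftrightarrow> diverges c"
proof
  assume H: "den c = {([], [])}"
  then have "([], []) \<in> denG kconst xvar c" using den_denG by (metis singletonI)
  then have "(map phi [], map phi []) \<in> denF c"
    by (rule denG_map[where g=phi, rotated 4]) (simp_all add: phi_add phi_one phi_mult phi_kconst phi_xvar)
  then have "([], []) \<in> denF c" by simp
  from den_run[OF this] obtain t0 where t0: "\<forall>t\<le>t0. \<exists>s. s 0 = init_state c \<and>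
     (\<forall>n. step (t + int n) (s n) (lab t [] n) (lab t [] n) (s (Suc n)))" by blast
  obtain s where "s 0 = init_state c" "\<forall>n. step (min t0 0 + int n) (s n) [] [] (s (Suc n))"
    using t0[rule_format, of "min t0 0"] by (auto simp: lab_def)
  then show "diverges c" unfolding diverges_def by (intro exI[of _ "min t0 0"]) auto
next
  assume "diverges c"
  then obtain t and s :: "nat \<Rightarrow> 'k state" where t: "t \<le> 0" "s 0 = init_state c"
    "\<forall>n. step (t + int n) (s n) [] [] (s (Suc n))"
    unfolding diverges_def by blast
  from run_den[of t s c "\<lambda>_. []" "\<lambda>_. []", OF t(1) t(2)] t(3)
  obtain u v where uv: "(u, v) \<in> denF c" "\<forall>n. [] = lab t u n" "\<forall>n. [] = lab t v n" by blast
  then have "u = []" "v = []" by (auto simp: lab_def)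
  with uv have e: "([], []) \<in> denF c" by simp
  obtain g :: "'k fls \<Rightarrow> 'k poly fract" where g: "\<forall>x y. g (x + y) = g x + g y"
    "\<forall>a x. g (phi a * x) = a * g x" "g 1 = 1"
    using exists_retraction by blast
  have gK: "g (fls_const r * p) = kconst r * g p" for r p
    using g(2) phi_kconst by metis
  have gX: "g (p * fls_X) = g p * xvar" for p
    using g(2) phi_xvar by (metis mult.commute)
  have "(map g [], map g []) \<in> denG kconst xvar c"
    using e by (rule denG_map[where g=g, rotated 4]) (use g gK gX in auto)
  then have "([], []) \<in> den c" by (simp add: den_denG)
  moreover have "den c \<subseteq> {([], [])}"
    using den_sort assms unfolding ACirc_def by fastforce
  ultimately show "den c = {([], [])}" by blast
qed

end
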